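(* Assume the $abc$-conjecture. Let $k\ge 3$ be an integer and $\epsilon>0$. Then there exist constants $c_\epsilon>0$ and $C>0$ (depending on $k$ and $\epsilon$) such that for every real $x \ge C$, the interval $(x,\ x + c_\epsilon x^{1-(2+\epsilon)/k}]$ contains at most one $k$-full number.
   Context: A positive integer $n$ is $k$-full if every prime $p$ dividing $n$ satisfies $p^k\mid n$. For a nonzero integer $m$, $\kappa(m)=\prod_{p\mid m} p$. The $abc$-conjecture is the statement: for every $\epsilon>0$ there is a constant $C_\epsilon>0$ such that for all integers $a,b,c$ with $a+b=c$ and $\gcd(a,b)=1$, one has $\max\{|a|,|b|,|c|\} \le C_\epsilon\, \kappa(abc)^{1+\epsilon}$. *)

theory Defs
  imports Complex_Main "HOL-Computational_Algebra.Primes"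
begin

definition k_full :: "nat \<Rightarrow> nat \<Rightarrow> bool" where
  "k_full k n \<longleftrightarrow> n > 0 \<and> (\<forall>p::nat. prime p \<longrightarrow> p dvd n \<longrightarrow> p ^ k dvd n)"

definition kappa :: "int \<Rightarrow> nat" where
  "kappa m = (\<Prod>p\<in>prime_factors (nat \<bar>m\<bar>). p)"

definition abc_conjecture :: bool where
  "abc_conjecture \<longleftrightarrow>
     (\<forall>\<epsilon>::real. \<epsilon> > 0 \<longrightarrow> (\<exists>C::real. C > 0 \<and>
        (\<forall>a b c :: int. a + b = c \<longrightarrow> gcd a b = 1 \<longrightarrow> a * b * c \<noteq> 0 \<longrightarrow>
           real_of_int (max \<bar>a\<bar> (max \<bar>b\<bar> \<bar>c\<bar>)) \<le> C * real (kappa (a * b * c)) powr (1 + \<epsilon>))))"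

end

theory Submission
  imports Defs
begin


definition kn :: "nat \<Rightarrow> nat" where "kn n = (\<Prod>p\<in>prime_factors n. p)"

lemma pf_pos: "(p::nat) \<in> prime_factors n \<Longrightarrow> p > 0"
  by (metis in_prime_factors_imp_prime prime_gt_0_nat)

lemma kappa_int: "kappa (int n) = kn n"
  by (simp add: kappa_def kn_def)

lemma kn_pow_dvd:
  assumes "n > 0" "\<forall>p\<in>prime_factors n. p ^ j dvd n"
  shows "kn n ^ j dvd n"
proof -
  have "kn n ^ j = (\<Prod>p\<in>prime_factors n. p ^ j)"
    by (simp add: kn_def prod_power_distrib)
  also have "\<dots> dvd (\<Prod>p\<in>prime_factors n. p ^ multiplicity p n)"
  proof (rule prod_dvd_prod)
    fix p assume p: "p \<in> prime_factors n"
    then have "prime p" by auto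
    have "p ^ j dvd n" using assms(2) p by blast
    moreover have "\<not> is_unit p" using \<open>prime p\<close> not_prime_unit by blast
    ultimately have "j \<le> multiplicity p n"
      using assms(1) power_dvd_iff_le_multiplicity[of n p j] by simp
    then show "p ^ j dvd p ^ multiplicity p n" by (simp add: le_imp_power_dvd)
  qed
  also have "\<dots> = n" using assms(1) prod_prime_factors[of n] by simp
  finally show ?thesis .
qed

lemma kn_le: assumes "n > 0" shows "kn n \<le> n"
proof -
  have "kn n ^ 1 dvd n" using assms by (intro kn_pow_dvd) (auto simp: in_prime_factors_iff)
  then show ?thesis using assms by (simp add: dvd_imp_le)
qed

lemma kn_pos: "kn n > 0"
  unfolding kn_def by (intro prod_pos) (simp add: pf_pos)

lemma kn_full: assumes "k_full k n" "k > 0" shows "real (kn n) \<le> real n powr (1 / real k)"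
proof -
  have "kn n ^ k dvd n" using assms by (intro kn_pow_dvd) (auto simp: k_full_def)
  then have "kn n ^ k \<le> n" using assms by (intro dvd_imp_le) (auto simp: k_full_def)
  then have "real (kn n) ^ k \<le> real n" by (metis of_nat_le_iff of_nat_power)
  then have "(real (kn n) ^ k) powr (1 / real k) \<le> real n powr (1 / real k)"
    by (intro powr_mono2) auto
  also have "(real (kn n) ^ k) powr (1 / real k) = real (kn n)"
    using assms(2) kn_pos[of n]
    by (simp add: powr_realpow[symmetric] powr_powr)
  finally show ?thesis .
qed

lemma kn_mult: "a > 0 \<Longrightarrow> b > 0 \<Longrightarrow> kn (a * b) \<le> kn a * kn b"
proof -
  assume a: "a > 0" and b: "b > 0"
  have "kn (a*b) = (\<Prod>p\<in>prime_factors a \<union> prime_factors b. p)"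
    using a b by (simp add: kn_def prime_factors_product)
  also have "\<dots> \<le> (\<Prod>p\<in>prime_factors a \<union> prime_factors b. p) * (\<Prod>p\<in>prime_factors a \<inter> prime_factors b. p)"
  proof -
    have "(\<Prod>p\<in>prime_factors a \<inter> prime_factors b. p) > 0"
      by (intro prod_pos) (auto simp: pf_pos)
    then have "X * 1 \<le> X * (\<Prod>p\<in>prime_factors a \<inter> prime_factors b. p)" for X :: nat
      by (intro mult_le_mono2) linarith
    then show ?thesis by (metis mult_1_right)
  qed
  also have "\<dots> = kn a * kn b"
    unfolding kn_def by (rule prod.union_inter) auto
  finally show ?thesis .
qed

lemma kn_dvd: "b > 0 \<Longrightarrow> a dvd b \<Longrightarrow> kn a \<le> kn b"
proof -
  assume b: "b > 0" and ab: "a dvd b"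
  have sub: "prime_factors a \<subseteq> prime_factors b" using b ab by (simp add: dvd_prime_factors)
  have "kn b = (\<Prod>p\<in>prime_factors b - prime_factors a. p) * kn a"
    unfolding kn_def by (rule prod.subset_diff[OF sub]) simp
  moreover have "(\<Prod>p\<in>prime_factors b - prime_factors a. p) > 0"
    by (intro prod_pos) (auto dest: pf_pos)
  then have "1 * kn a \<le> (\<Prod>p\<in>prime_factors b - prime_factors a. p) * kn a"
    by (intro mult_le_mono1) linarith
  ultimately show ?thesis by linarith
qed



lemma core:
  fixes C0 \<delta> :: real and k m n :: nat
  assumes C0: "C0 > 0" and d: "\<delta> > 0" and k: "k > 0"
    and hyp: "\<forall>a b c :: int. a + b = c \<longrightarrow> gcd a b = 1 \<longrightarrow> a * b * c \<noteq> 0 \<longrightarrow>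
           real_of_int (max \<bar>a\<bar> (max \<bar>b\<bar> \<bar>c\<bar>)) \<le> C0 * real (kappa (a * b * c)) powr (1 + \<delta>)"
    and fm: "k_full k m" and fn: "k_full k n" and mn: "m < n"
  shows "real n \<le> C0 * (real m powr (1/k) * real n powr (1/k) * real (n-m)) powr (1+\<delta>)"
proof -
  have m0: "m > 0" using fm by (simp add: k_full_def)
  define g where "g = gcd m n"
  have g0: "g > 0" using m0 by (simp add: g_def)
  define a where "a = m div g"
  define c where "c = n div g"
  have ma: "m = g * a" unfolding a_def g_def by simp
  have nc: "n = g * c" unfolding c_def g_def by simp
  have ac: "a < c" using mn ma nc g0 by (metis mult_less_cancel1)
  define b where "b = c - a"
  have nm: "n - m = g * b" using ma nc ac by (simp add: b_def diff_mult_distrib2)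
  have a0: "a > 0" using m0 ma by simp
  have b0: "b > 0" using ac b_def by simp
  have cop: "coprime a c" unfolding a_def c_def g_def using m0 by (intro div_gcd_coprime) simp
  have cab: "c = b + a" using ac b_def by simp
  have "gcd a c = 1" using cop by (simp add: coprime_iff_gcd_eq_1)
  then have "gcd a b = 1" using cab by (metis gcd_add2 add.commute)
  then have gab: "gcd (int a) (int b) = 1" by (metis gcd_int_int_eq of_nat_1)
  have h0: "real_of_int (max \<bar>int a\<bar> (max \<bar>int b\<bar> \<bar>int c\<bar>)) \<le> C0 * real (kappa (int a * int b * int c)) powr (1 + \<delta>)"
  proof -
    have e1: "int a + int b = int c" using cab by simp
    have e2: "int a * int b * int c \<noteq> 0" using a0 b0 cab by simp
    show ?thesis using hyp[rule_format, OF e1 gab e2] .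

  qed
  have mx: "max \<bar>int a\<bar> (max \<bar>int b\<bar> \<bar>int c\<bar>) = int c" using cab by simp
  have prd: "int a * int b * int c = int (a * b * c)" by simp
  have "real_of_int (int c) \<le> C0 * real (kappa (int (a*b*c))) powr (1 + \<delta>)"
    using h0 unfolding mx prd .
  then have h1: "real c \<le> C0 * real (kn (a*b*c)) powr (1 + \<delta>)"
    unfolding kappa_int of_int_of_nat_eq .
  have "kn (a*b*c) \<le> kn (a*b) * kn c" using a0 b0 cab by (intro kn_mult) auto
  also have "\<dots> \<le> kn a * kn b * kn c" using a0 b0 by (intro mult_le_mono1 kn_mult) auto
  also have "\<dots> \<le> kn m * b * kn n"
  proof (intro mult_le_mono)
    show "kn a \<le> kn m" by (rule kn_dvd[OF m0]) (simp add: ma)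
    show "kn b \<le> b" using b0 by (rule kn_le)
    have n0: "n > 0" using m0 mn by simp
    show "kn c \<le> kn n" by (rule kn_dvd[OF n0]) (simp add: nc)
  qed
  finally have "real (kn (a*b*c)) \<le> real (kn m) * real b * real (kn n)"
    by (metis of_nat_le_iff of_nat_mult)
  also have "\<dots> \<le> real m powr (1/k) * real b * real n powr (1/k)"
    using kn_full[OF fm k] kn_full[OF fn k] by (intro mult_mono) auto
  finally have h2: "real (kn (a*b*c)) powr (1+\<delta>) \<le> (real m powr (1/k) * real b * real n powr (1/k)) powr (1+\<delta>)"
    using d by (intro powr_mono2) auto
  have "real n = real g * real c" using nc by simp
  also have "\<dots> \<le> real g * (C0 * (real m powr (1/k) * real b * real n powr (1/k)) powr (1+\<delta>))"
  proof -
    have "C0 * real (kn (a*b*c)) powr (1+\<delta>) \<le> C0 * (real m powr (1/k) * real b * real n powr (1/k)) powr (1+\<delta>)"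
      using h2 C0 by (intro mult_left_mono) auto
    then show ?thesis using h1 by (intro mult_left_mono) auto
  qed
  also have "\<dots> \<le> real g powr (1+\<delta>) * (C0 * (real m powr (1/k) * real b * real n powr (1/k)) powr (1+\<delta>))"
  proof (intro mult_right_mono)
    have "real g powr 1 \<le> real g powr (1+\<delta>)" using g0 d by (intro powr_mono) auto
    then show "real g \<le> real g powr (1+\<delta>)" using g0 by simp
  qed (use C0 in auto)
  also have "\<dots> = C0 * (real g * (real m powr (1/k) * real b * real n powr (1/k))) powr (1+\<delta>)"
    by (simp add: powr_mult)
  also have "real g * (real m powr (1/k) * real b * real n powr (1/k)) = real m powr (1/k) * real n powr (1/k) * real (n-m)"
    using nm by simp
  finally show ?thesis .
qed



lemma gap:
  fixes C0 \<delta> x c e :: real and k m n :: nat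
  assumes C0: "C0 > 0" and d: "\<delta> > 0" and k: "k > 0"
    and hyp: "\<forall>a b c :: int. a + b = c \<longrightarrow> gcd a b = 1 \<longrightarrow> a * b * c \<noteq> 0 \<longrightarrow>
           real_of_int (max \<bar>a\<bar> (max \<bar>b\<bar> \<bar>c\<bar>)) \<le> C0 * real (kappa (a * b * c)) powr (1 + \<delta>)"
    and fm: "k_full k m" and fn: "k_full k n" and mn: "m < n"
    and x1: "x \<ge> 1"
    and e: "e = 1 - \<delta> - 2 / real k" 
    and c: "c = min 1 (1/C0) / 4 powr (1 / real k)"
    and xm: "x < real m" and nx: "real n \<le> x + c * x powr e"
  shows False
proof -
  define \<rho> where "\<rho> = 4 powr (1 / real k)"
  have \<rho>1: "\<rho> \<ge> 1" unfolding \<rho>_def using k by (intro ge_one_powr_ge_zero) auto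
  define t where "t = min 1 (1/C0)"
  have t0: "t > 0" and t1: "t \<le> 1" and Ct: "C0 * t \<le> 1" using C0 unfolding t_def
    by (auto simp: min_def field_simps)
  have ct: "c = t / \<rho>" using c unfolding t_def \<rho>_def by simp
  have c0: "c > 0" using ct t0 \<rho>1 by simp
  have c1: "c \<le> 1" using ct t1 \<rho>1 by (simp add: divide_le_eq_1) 
  have x0: "x > 0" using x1 by simp
  have "2 / real k \<ge> 0" by simp
  then have ek: "e \<le> 1" using e d by linarith
  have "x powr e \<le> x powr 1" using x1 ek by (intro powr_mono) auto
  then have xe: "x powr e \<le> x" using x0 by simp
  have "c * x powr e \<le> 1 * x" using c0 c1 xe by (intro mult_mono) auto
  then have n2: "real n \<le> 2 * x" using nx by simp
  have m2: "real m \<le> 2 * x" using n2 mn by simp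
  have nm: "real (n - m) \<le> c * x powr e" using nx xm mn by (simp add: of_nat_diff)
  have core1: "real n \<le> C0 * (real m powr (1/k) * real n powr (1/k) * real (n-m)) powr (1+\<delta>)"
    by (rule core[OF C0 d k hyp fm fn mn])
  have "real m powr (1/k) * real n powr (1/k) * real (n-m) \<le> (2*x) powr (1/k) * (2*x) powr (1/k) * (c * x powr e)"
    using m2 n2 nm by (intro mult_mono powr_mono2) auto
  also have "(2*x) powr (1/k) * (2*x) powr (1/k) * (c * x powr e) = (\<rho> * c) * x powr (2 / real k + e)"
  proof -
    have "(2*x) powr (1/k) * (2*x) powr (1/k) = (2*x) powr (2/k)"
      by (simp add: powr_add[symmetric])
    also have "\<dots> = 2 powr (2/k) * x powr (2/k)" using x0 by (simp add: powr_mult)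
    also have "2 powr (2/k) = \<rho>" unfolding \<rho>_def
    proof -
      have "(4::real) = 2 powr 2" by simp
      then have "(4::real) powr (1/k) = (2 powr 2) powr (1/k)" by simp
      also have "\<dots> = 2 powr (2 * (1/k))" by (rule powr_powr)
      finally have "(4::real) powr (1/k) = 2 powr (2 * (1/k))" .
      then show "2 powr (2/k) = 4 powr (1/k)" by simp
    qed
    finally show ?thesis by (simp add: powr_add)
  qed
  also have "\<rho> * c = t" using ct \<rho>1 by simp
  also have "2 / real k + e = 1 - \<delta>" using e by simp
  finally have Q: "real m powr (1/k) * real n powr (1/k) * real (n-m) \<le> t * x powr (1 - \<delta>)" .
  have "real n \<le> C0 * (t * x powr (1 - \<delta>)) powr (1+\<delta>)"
  proof -
    have P0: "0 \<le> real m powr (1/k) * real n powr (1/k) * real (n-m)" by simp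
    have "(real m powr (1/k) * real n powr (1/k) * real (n-m)) powr (1+\<delta>) \<le> (t * x powr (1 - \<delta>)) powr (1+\<delta>)"
      using d P0 Q by (intro powr_mono2) auto
    then have "C0 * (real m powr (1/k) * real n powr (1/k) * real (n-m)) powr (1+\<delta>) \<le> C0 * (t * x powr (1 - \<delta>)) powr (1+\<delta>)"
      using C0 by (intro mult_left_mono) auto
    then show ?thesis using core1 by linarith
  qed
  also have "(t * x powr (1 - \<delta>)) powr (1+\<delta>) = t powr (1+\<delta>) * x powr ((1-\<delta>)*(1+\<delta>))"
    using t0 x0 by (simp add: powr_mult powr_powr)
  also have "\<dots> \<le> t * x"
  proof (intro mult_mono)
    have "t powr (1+\<delta>) \<le> t powr 1" using t0 t1 d by (intro powr_mono') auto
    then show "t powr (1+\<delta>) \<le> t" using t0 by simp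
    have "x powr ((1-\<delta>)*(1+\<delta>)) \<le> x powr 1" using x1 d by (intro powr_mono) (auto simp: algebra_simps)
    then show "x powr ((1-\<delta>)*(1+\<delta>)) \<le> x" using x0 by simp
  qed (use t0 x0 in auto)
  finally have "real n \<le> C0 * (t * x)" using C0 by (simp add: mult_left_mono)
  also have "\<dots> = (C0 * t) * x" by simp
  also have "\<dots> \<le> x" using Ct x0 by (simp add: mult_le_cancel_right1)
  finally show False using xm mn by simp
qed


theorem mainTheorem7:
  fixes k :: nat and \<epsilon> :: real
  assumes "abc_conjecture" and "k \<ge> 3" and "\<epsilon> > 0"
  shows "\<exists>c C :: real. c > 0 \<and> C > 0 \<and>
    (\<forall>x::real. x \<ge> C \<longrightarrow>
       (\<forall>m n :: nat.
          k_full k m \<longrightarrow> k_full k n \<longrightarrow>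
          x < real m \<longrightarrow> real m \<le> x + c * x powr (1 - (2 + \<epsilon>) / real k) \<longrightarrow>
          x < real n \<longrightarrow> real n \<le> x + c * x powr (1 - (2 + \<epsilon>) / real k) \<longrightarrow>
          m = n))"
proof -
  have k: "k > 0" using assms(2) by simp
  define \<delta> where "\<delta> = \<epsilon> / real k"
  have d: "\<delta> > 0" using assms(3) k by (simp add: \<delta>_def)
  obtain C0 where C0: "C0 > 0" and hyp: "\<forall>a b c :: int. a + b = c \<longrightarrow> gcd a b = 1 \<longrightarrow> a * b * c \<noteq> 0 \<longrightarrow>
           real_of_int (max \<bar>a\<bar> (max \<bar>b\<bar> \<bar>c\<bar>)) \<le> C0 * real (kappa (a * b * c)) powr (1 + \<delta>)"
    using assms(1) d unfolding abc_conjecture_def by blast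
  define c where "c = min 1 (1/C0) / 4 powr (1 / real k)"
  have c0: "c > 0" using C0 unfolding c_def by simp
  have e: "1 - (2 + \<epsilon>) / real k = 1 - \<delta> - 2 / real k"
    unfolding \<delta>_def using k by (simp add: field_simps)
  show ?thesis
  proof (intro exI conjI allI impI)
    show "c > 0" by (rule c0)
    show "(1::real) > 0" by simp
    fix x :: real and m n :: nat
    assume x1: "1 \<le> x" and fm: "k_full k m" and fn: "k_full k n"
      and xm: "x < real m" and mx: "real m \<le> x + c * x powr (1 - (2 + \<epsilon>) / real k)"
      and xn: "x < real n" and nx: "real n \<le> x + c * x powr (1 - (2 + \<epsilon>) / real k)"
    show "m = n"
    proof (rule linorder_cases[of m n])
      assume "m < n"
      from gap[OF C0 d k hyp fm fn this x1 e c_def xm nx] show ?thesis ..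
    next
      assume "n < m"
      from gap[OF C0 d k hyp fn fm this x1 e c_def xn mx] show ?thesis ..
    qed
  qed
qed

end
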